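(* Let $S$ be an abundant semigroup with a quasi-ideal adequate transversal $S^0$. Then $S$ is quasi-adequate if and only if $\overline{xy}=\overline{x}\,\overline{y}$ for all $x,y\in S$.
   Context: For a semigroup $S$, $S^1$ is $S$ with an identity adjoined, $\mathcal{L},\mathcal{R}$ Green's relations. $\mathcal{R}^\ast=\{(a,b):\forall x,y\in S^1,\ xa=ya\iff xb=yb\}$, $\mathcal{L}^\ast=\{(a,b):\forall x,y\in S^1,\ ax=ay\iff bx=by\}$. $S$ is abundant if each $\mathcal{R}^\ast$- and $\mathcal{L}^\ast$-class contains an idempotent; adequate if also idempotents commute (then $a^+$, $a^\ast$ are the unique idempotents $\mathcal{R}^\ast$-, resp. $\mathcal{L}^\ast$-related to $a$). Quasi-adequate: abundant with idempotents forming a subsemigroup. An abundant subsemigroup $U$ of abundant $S$ is a $\ast$-subsemigroup if $\mathcal{L}^\ast(U)=\mathcal{L}^\ast(S)\cap(U\times U)$, $\mathcal{R}^\ast(U)=\mathcal{R}^\ast(S)\cap(U\times U)$. An adequate $\ast$-subsemigroup $S^0$ of abundant $S$ is an adequate transversal if each $x\in S$ has a unique $\overline{x}\in S^0$ and idempotents $e,f$ of $S$ with $x=e\overline{x}f$, $e\,\mathcal{L}\,\overline{x}^+$, $f\,\mathcal{R}\,\overline{x}^\ast$. It is a quasi-ideal if $S^0SS^0\subseteq S^0$. *)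

theory Defs
  imports Main
begin

text \<open>The semigroup S is the whole type 'a (class semigroup_mult). Subsemigroups
are subsets. Elements of U^1 are modelled as 'a option, None being the adjoined identity.\<close>

definition one_adj :: "'a set \<Rightarrow> 'a option set" where
  "one_adj A = insert None (Some ` A)"

fun lmul :: "'a::semigroup_mult option \<Rightarrow> 'a \<Rightarrow> 'a" where
  "lmul None a = a"
| "lmul (Some x) a = x * a"

fun rmul :: "'a::semigroup_mult \<Rightarrow> 'a option \<Rightarrow> 'a" where
  "rmul a None = a"
| "rmul a (Some x) = a * x"

definition idem :: "'a::semigroup_mult \<Rightarrow> bool" where
  "idem e \<longleftrightarrow> e * e = e"

definition subsemigroup :: "'a::semigroup_mult set \<Rightarrow> bool" where
  "subsemigroup A \<longleftrightarrow> (\<forall>a\<in>A. \<forall>b\<in>A. a * b \<in> A)"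

definition greenL :: "'a::semigroup_mult \<Rightarrow> 'a \<Rightarrow> bool" where
  "greenL a b \<longleftrightarrow> (\<exists>u. a = lmul u b) \<and> (\<exists>v. b = lmul v a)"

definition greenR :: "'a::semigroup_mult \<Rightarrow> 'a \<Rightarrow> bool" where
  "greenR a b \<longleftrightarrow> (\<exists>u. a = rmul b u) \<and> (\<exists>v. b = rmul a v)"

definition Rstar :: "'a::semigroup_mult set \<Rightarrow> 'a \<Rightarrow> 'a \<Rightarrow> bool" where
  "Rstar A a b \<longleftrightarrow> a \<in> A \<and> b \<in> A \<and>
     (\<forall>x\<in>one_adj A. \<forall>y\<in>one_adj A. lmul x a = lmul y a \<longleftrightarrow> lmul x b = lmul y b)"

definition Lstar :: "'a::semigroup_mult set \<Rightarrow> 'a \<Rightarrow> 'a \<Rightarrow> bool" where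
  "Lstar A a b \<longleftrightarrow> a \<in> A \<and> b \<in> A \<and>
     (\<forall>x\<in>one_adj A. \<forall>y\<in>one_adj A. rmul a x = rmul a y \<longleftrightarrow> rmul b x = rmul b y)"

definition abundant :: "'a::semigroup_mult set \<Rightarrow> bool" where
  "abundant A \<longleftrightarrow> subsemigroup A \<and>
     (\<forall>a\<in>A. (\<exists>e\<in>A. idem e \<and> Rstar A a e) \<and> (\<exists>e\<in>A. idem e \<and> Lstar A a e))"

definition adequate :: "'a::semigroup_mult set \<Rightarrow> bool" where
  "adequate A \<longleftrightarrow> abundant A \<and> (\<forall>e\<in>A. \<forall>f\<in>A. idem e \<longrightarrow> idem f \<longrightarrow> e * f = f * e)"

definition quasi_adequate :: "'a::semigroup_mult set \<Rightarrow> bool" where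
  "quasi_adequate A \<longleftrightarrow> abundant A \<and>
     (\<forall>e\<in>A. \<forall>f\<in>A. idem e \<longrightarrow> idem f \<longrightarrow> idem (e * f))"

definition star_subsemigroup :: "'a::semigroup_mult set \<Rightarrow> bool" where
  "star_subsemigroup U \<longleftrightarrow> abundant U \<and>
     (\<forall>a\<in>U. \<forall>b\<in>U. Lstar U a b \<longleftrightarrow> Lstar UNIV a b) \<and>
     (\<forall>a\<in>U. \<forall>b\<in>U. Rstar U a b \<longleftrightarrow> Rstar UNIV a b)"

definition dplus :: "'a::semigroup_mult set \<Rightarrow> 'a \<Rightarrow> 'a" where
  "dplus A a = (THE e. e \<in> A \<and> idem e \<and> Rstar A a e)"

definition dstar :: "'a::semigroup_mult set \<Rightarrow> 'a \<Rightarrow> 'a" where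
  "dstar A a = (THE e. e \<in> A \<and> idem e \<and> Lstar A a e)"

definition transversal_rep :: "'a::semigroup_mult set \<Rightarrow> 'a \<Rightarrow> 'a \<Rightarrow> bool" where
  "transversal_rep S0 x xb \<longleftrightarrow> xb \<in> S0 \<and> (\<exists>e f. idem e \<and> idem f \<and> x = e * xb * f \<and>
       greenL e (dplus S0 xb) \<and> greenR f (dstar S0 xb))"

definition adequate_transversal :: "'a::semigroup_mult set \<Rightarrow> bool" where
  "adequate_transversal S0 \<longleftrightarrow> adequate S0 \<and> star_subsemigroup S0 \<and>
     (\<forall>x. \<exists>!xb. transversal_rep S0 x xb)"

definition tbar :: "'a::semigroup_mult set \<Rightarrow> 'a \<Rightarrow> 'a" where
  "tbar S0 x = (THE xb. transversal_rep S0 x xb)"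

definition quasi_ideal :: "'a::semigroup_mult set \<Rightarrow> bool" where
  "quasi_ideal S0 \<longleftrightarrow> (\<forall>a\<in>S0. \<forall>s. \<forall>b\<in>S0. a * s * b \<in> S0)"

end

theory Submission
  imports Defs
begin

lemma lmul_idem: "idem (q::'a::semigroup_mult) \<Longrightarrow> lmul u q * q = lmul u q"
  by (cases u) (simp_all add: idem_def mult.assoc)

lemma rmul_idem: "idem (q::'a::semigroup_mult) \<Longrightarrow> q * rmul q u = rmul q u"
  by (cases u) (simp_all add: idem_def flip: mult.assoc)

lemma greenL_idem:
  assumes "idem (p::'a::semigroup_mult)" "idem q"
  shows "greenL p q \<longleftrightarrow> p * q = p \<and> q * p = q"
proof
  assume "greenL p q"
  then obtain u v where u: "p = lmul u q" and v: "q = lmul v p" unfolding greenL_def by blast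
  have "p * q = p" using lmul_idem[OF assms(2), of u] u by metis
  moreover have "q * p = q" using lmul_idem[OF assms(1), of v] v by metis
  ultimately show "p * q = p \<and> q * p = q" by blast
next
  assume h: "p * q = p \<and> q * p = q"
  then have "p = lmul (Some p) q" "q = lmul (Some q) p" by simp_all
  then show "greenL p q" unfolding greenL_def by blast
qed

lemma greenR_idem:
  assumes "idem (p::'a::semigroup_mult)" "idem q"
  shows "greenR p q \<longleftrightarrow> q * p = p \<and> p * q = q"
proof
  assume "greenR p q"
  then obtain u v where u: "p = rmul q u" and v: "q = rmul p v" unfolding greenR_def by blast
  have "q * p = p" using rmul_idem[OF assms(2), of u] u by metis
  moreover have "p * q = q" using rmul_idem[OF assms(1), of v] v by metis
  ultimately show "q * p = p \<and> p * q = q" by blast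
next
  assume h: "q * p = p \<and> p * q = q"
  then have "p = rmul q (Some p)" "q = rmul p (Some q)" by simp_all
  then show "greenR p q" unfolding greenR_def by blast
qed

lemma Rstar_mono: "Rstar A a e \<Longrightarrow> x \<in> A \<Longrightarrow> x * a = a \<Longrightarrow> x * e = e"
proof -
  assume r: "Rstar A a e" and x: "x \<in> A" and xa: "x * a = a"
  have "Some x \<in> one_adj A" "None \<in> one_adj A" using x unfolding one_adj_def by auto
  with r have "lmul (Some x) a = lmul None a \<longleftrightarrow> lmul (Some x) e = lmul None e"
    unfolding Rstar_def by blast
  with xa show ?thesis by simp
qed

lemma Rstar_left: "Rstar A a e \<Longrightarrow> idem e \<Longrightarrow> e * a = a"
proof -
  assume r: "Rstar A a e" and i: "idem e"
  have "e \<in> A" using r unfolding Rstar_def by blast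
  then have "Some e \<in> one_adj A" "None \<in> one_adj A" unfolding one_adj_def by auto
  with r have "lmul (Some e) a = lmul None a \<longleftrightarrow> lmul (Some e) e = lmul None e"
    unfolding Rstar_def by blast
  with i show ?thesis by (simp add: idem_def)
qed

lemma Lstar_mono: "Lstar A a e \<Longrightarrow> x \<in> A \<Longrightarrow> a * x = a \<Longrightarrow> e * x = e"
proof -
  assume r: "Lstar A a e" and x: "x \<in> A" and xa: "a * x = a"
  have "Some x \<in> one_adj A" "None \<in> one_adj A" using x unfolding one_adj_def by auto
  with r have "rmul a (Some x) = rmul a None \<longleftrightarrow> rmul e (Some x) = rmul e None"
    unfolding Lstar_def by blast
  with xa show ?thesis by simp
qed

lemma Lstar_right: "Lstar A a e \<Longrightarrow> idem e \<Longrightarrow> a * e = a"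
proof -
  assume r: "Lstar A a e" and i: "idem e"
  have "e \<in> A" using r unfolding Lstar_def by blast
  then have "Some e \<in> one_adj A" "None \<in> one_adj A" unfolding one_adj_def by auto
  with r have "rmul a (Some e) = rmul a None \<longleftrightarrow> rmul e (Some e) = rmul e None"
    unfolding Lstar_def by blast
  with i show ?thesis by (simp add: idem_def)
qed

lemma dplus_prop:
  assumes "adequate A" "a \<in> A"
  shows "dplus A a \<in> A \<and> idem (dplus A a) \<and> Rstar A a (dplus A a)"
proof -
  have ex: "\<exists>e. e \<in> A \<and> idem e \<and> Rstar A a e"
    using assms unfolding adequate_def abundant_def by blast
  have un: "e = e'" if "e \<in> A \<and> idem e \<and> Rstar A a e" "e' \<in> A \<and> idem e' \<and> Rstar A a e'" for e e'
  proof -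
    have 1: "e' * e = e" using that Rstar_mono[of A a e e'] Rstar_left[of A a e'] by blast
    have 2: "e * e' = e'" using that Rstar_mono[of A a e' e] Rstar_left[of A a e] by blast
    have "e * e' = e' * e" using assms(1) that unfolding adequate_def by blast
    then show ?thesis using 1 2 by simp
  qed
  have "\<exists>!e. e \<in> A \<and> idem e \<and> Rstar A a e" using ex un by blast
  then show ?thesis unfolding dplus_def by (rule theI')
qed

lemma dstar_prop:
  assumes "adequate A" "a \<in> A"
  shows "dstar A a \<in> A \<and> idem (dstar A a) \<and> Lstar A a (dstar A a)"
proof -
  have ex: "\<exists>e. e \<in> A \<and> idem e \<and> Lstar A a e"
    using assms unfolding adequate_def abundant_def by blast
  have un: "e = e'" if "e \<in> A \<and> idem e \<and> Lstar A a e" "e' \<in> A \<and> idem e' \<and> Lstar A a e'" for e e'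
  proof -
    have 1: "e * e' = e" using that Lstar_mono[of A a e e'] Lstar_right[of A a e'] by blast
    have 2: "e' * e = e'" using that Lstar_mono[of A a e' e] Lstar_right[of A a e] by blast
    have "e * e' = e' * e" using assms(1) that unfolding adequate_def by blast
    then show ?thesis using 1 2 by simp
  qed
  have "\<exists>!e. e \<in> A \<and> idem e \<and> Lstar A a e" using ex un by blast
  then show ?thesis unfolding dstar_def by (rule theI')
qed


lemma key_band:
  fixes a b f g :: "'a::semigroup_mult" and S0 :: "'a set"
  assumes qi: "\<forall>a\<in>S0. \<forall>s. \<forall>b\<in>S0. a * s * b \<in> S0" and sub: "subsemigroup S0"
    and comm: "\<forall>e\<in>S0. \<forall>f\<in>S0. idem e \<longrightarrow> idem f \<longrightarrow> e * f = f * e"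
    and band: "\<forall>e f::'a. idem e \<longrightarrow> idem f \<longrightarrow> idem (e * f)"
    and aS: "a \<in> S0" and bS: "b \<in> S0" and ia: "idem a" and ib: "idem b"
    and if': "idem f" and ig: "idem g"
    and af: "a * f = f" and fa: "f * a = a" and gb: "g * b = g" and bg: "b * g = b"
  shows "f * g = a * b"
proof -
  have aa: "a * a = a" using ia by (simp add: idem_def)
  have bb: "b * b = b" using ib by (simp add: idem_def)
  have iag: "idem (a * g)" using band ia ig by blast
  have ifg: "idem (f * g)" using band if' ig by blast
  have igf: "idem (g * f)" using band if' ig by blast
  have iab: "idem (a * b)" using band ia ib by blast
  have "a * g * b = a * g" using gb by (simp add: mult.assoc)
  moreover have "a * g * b \<in> S0" using qi aS bS by blast
  ultimately have agS: "a * g \<in> S0" by simp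
  have "a * (f * g) * b = f * g" using af gb by (simp add: mult.assoc flip: mult.assoc[of a f])
  moreover have "a * (f * g) * b \<in> S0" using qi aS bS by blast
  ultimately have fgS: "f * g \<in> S0" by simp
  have abS: "a * b \<in> S0" using sub aS bS unfolding subsemigroup_def by blast
  have abba: "a * b = b * a" using comm aS bS ia ib by blast
  have c1: "(a * g) * a = a * (a * g)" using comm agS aS iag ia by blast
  have e1: "(a * g) * (a * b) = a * g"
  proof -
    have "(a * g) * (a * b) = ((a * g) * a) * b" by (simp add: mult.assoc)
    also have "\<dots> = (a * (a * g)) * b" using c1 by simp
    also have "\<dots> = a * g" using aa gb by (simp add: mult.assoc flip: mult.assoc[of a a])
    finally show ?thesis .
  qed
  have e2: "(a * b) * (a * g) = a * b"
  proof -
    have "(a * b) * (a * g) = a * (b * a) * g" by (simp add: mult.assoc)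
    also have "\<dots> = a * (a * b) * g" using abba by simp
    also have "\<dots> = a * b" using aa bg by (simp add: mult.assoc flip: mult.assoc[of a a])
    finally show ?thesis .
  qed
  have agab: "a * g = a * b" using e1 e2 comm agS abS iag iab by metis
  have uvu: "(a * g) * (f * g) * (a * g) = a * g"
  proof -
    have "(a * g) * (f * g) * (a * g) = a * ((g * f) * (g * (f * a))) * g"
      using fa by (simp add: mult.assoc)
    also have "\<dots> = a * (((g * f) * (g * f)) * a) * g" by (simp add: mult.assoc)
    also have "\<dots> = a * ((g * f) * a) * g" using igf by (simp add: idem_def)
    also have "\<dots> = (a * g) * (a * g)" using fa by (simp add: mult.assoc)
    also have "\<dots> = a * g" using iag by (simp add: idem_def)
    finally show ?thesis .
  qed
  have cv: "(f * g) * (a * b) = (a * b) * (f * g)" using comm fgS abS ifg iab by blast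
  have uv: "(a * b) * (f * g) = a * b"
  proof -
    have "a * b = (a * b) * (f * g) * (a * b)" using uvu agab by simp
    also have "\<dots> = (a * b) * ((a * b) * (f * g))" using cv by (simp add: mult.assoc)
    also have "\<dots> = (a * b) * (f * g)" using iab by (simp add: idem_def flip: mult.assoc)
    finally show ?thesis by simp
  qed
  have vu: "(f * g) * (a * b) = f * g"
  proof -
    have ca: "(f * g) * a = a * (f * g)" using comm fgS aS ifg ia by blast
    have "(f * g) * (a * b) = ((f * g) * a) * b" by (simp add: mult.assoc)
    also have "\<dots> = (a * (f * g)) * b" using ca by simp
    also have "\<dots> = f * g" using af gb by (simp add: mult.assoc flip: mult.assoc[of a f])
    finally show ?thesis .
  qed
  show ?thesis using uv vu cv by simp
qed


theorem proposition2p7: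
  fixes S0 :: "'a::semigroup_mult set"
  assumes "abundant (UNIV :: 'a set)"
    and "adequate_transversal S0"
    and "quasi_ideal S0"
  shows "quasi_adequate (UNIV :: 'a set) \<longleftrightarrow>
         (\<forall>x y. tbar S0 (x * y) = tbar S0 x * tbar S0 y)"
proof -
  from assms(2) have adq: "adequate S0" and uniq: "\<forall>x. \<exists>!xb. transversal_rep S0 x xb"
    unfolding adequate_transversal_def by blast+
  have sub: "subsemigroup S0" using adq unfolding adequate_def abundant_def by blast
  have subm: "\<And>a b. a \<in> S0 \<Longrightarrow> b \<in> S0 \<Longrightarrow> a * b \<in> S0" using sub unfolding subsemigroup_def by blast
  have qi: "\<forall>a\<in>S0. \<forall>s. \<forall>b\<in>S0. a * s * b \<in> S0" using assms(3) unfolding quasi_ideal_def .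
  have comm: "\<forall>e\<in>S0. \<forall>f\<in>S0. idem e \<longrightarrow> idem f \<longrightarrow> e * f = f * e"
    using adq unfolding adequate_def by blast
  have rep: "transversal_rep S0 x (tbar S0 x)" for x
  proof -
    have "\<exists>!xb. transversal_rep S0 x xb" using uniq by blast
    then show ?thesis unfolding tbar_def by (rule theI')
  qed
  have repu: "tbar S0 x = c" if "transversal_rep S0 x c" for x c
  proof -
    have "\<exists>!xb. transversal_rep S0 x xb" using uniq by blast
    then show ?thesis unfolding tbar_def using that by (rule the1_equality)
  qed
  have dp: "dplus S0 a \<in> S0 \<and> idem (dplus S0 a) \<and> Rstar S0 a (dplus S0 a)" if "a \<in> S0" for a
    using dplus_prop[OF adq that] .
  have ds: "dstar S0 a \<in> S0 \<and> idem (dstar S0 a) \<and> Lstar S0 a (dstar S0 a)" if "a \<in> S0" for a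
    using dstar_prop[OF adq that] .
  have dpl: "dplus S0 a * a = a" if "a \<in> S0" for a using dp[OF that] Rstar_left by blast
  have dsr: "a * dstar S0 a = a" if "a \<in> S0" for a using ds[OF that] Lstar_right by blast
  have fixp: "tbar S0 a = a" if aS: "a \<in> S0" for a
  proof -
    let ?p = "dplus S0 a" and ?s = "dstar S0 a"
    have ip: "idem ?p" and isd: "idem ?s" using dp[OF aS] ds[OF aS] by blast+
    have "a = ?p * a * ?s" using dpl[OF aS] dsr[OF aS] by (simp add: mult.assoc)
    moreover have "greenL ?p ?p" using greenL_idem[OF ip ip] ip by (simp add: idem_def)
    moreover have "greenR ?s ?s" using greenR_idem[OF isd isd] isd by (simp add: idem_def)
    ultimately have "transversal_rep S0 a a" unfolding transversal_rep_def using aS ip isd by blast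
    then show ?thesis by (rule repu)
  qed
  have idS0: "dplus S0 e = e \<and> dstar S0 e = e" if eS: "e \<in> S0" and ie: "idem e" for e
  proof -
    let ?p = "dplus S0 e" and ?s = "dstar S0 e"
    have ee: "e * e = e" using ie by (simp add: idem_def)
    have p: "?p \<in> S0" "idem ?p" "Rstar S0 e ?p" using dp[OF eS] by blast+
    have s: "?s \<in> S0" "idem ?s" "Lstar S0 e ?s" using ds[OF eS] by blast+
    have "e * ?p = ?p" using Rstar_mono[OF p(3) eS ee] .
    moreover have "?p * e = e" using dpl[OF eS] .
    moreover have "e * ?p = ?p * e" using comm eS p ie by blast
    ultimately have 1: "?p = e" by simp
    have "?s * e = ?s" using Lstar_mono[OF s(3) eS ee] .
    moreover have "e * ?s = e" using dsr[OF eS] .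
    moreover have "e * ?s = ?s * e" using comm eS s ie by blast
    ultimately have 2: "?s = e" by simp
    show ?thesis using 1 2 by blast
  qed
  show ?thesis
  proof
    assume qa: "quasi_adequate (UNIV :: 'a set)"
    then have band: "\<forall>e f::'a. idem e \<longrightarrow> idem f \<longrightarrow> idem (e * f)"
      unfolding quasi_adequate_def by blast
    show "\<forall>x y. tbar S0 (x * y) = tbar S0 x * tbar S0 y"
    proof (intro allI)
      fix x y :: 'a
      define xb where "xb = tbar S0 x"
      define yb where "yb = tbar S0 y"
      obtain e f where xS: "xb \<in> S0" and ie: "idem e" and if': "idem f" and x: "x = e * xb * f"
        and eL: "greenL e (dplus S0 xb)" and fR: "greenR f (dstar S0 xb)"
        using rep[of x] unfolding transversal_rep_def xb_def by blast
      obtain g h where yS: "yb \<in> S0" and ig: "idem g" and ih: "idem h" and y: "y = g * yb * h"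
        and gL: "greenL g (dplus S0 yb)" and hR: "greenR h (dstar S0 yb)"
        using rep[of y] unfolding transversal_rep_def yb_def by blast
      define a where "a = dstar S0 xb"
      define b where "b = dplus S0 yb"
      define p where "p = dplus S0 xb"
      define q where "q = dstar S0 yb"
      have aS: "a \<in> S0" and ia: "idem a" using ds[OF xS] a_def by blast+
      have bS: "b \<in> S0" and ib: "idem b" using dp[OF yS] b_def by blast+
      have pS: "p \<in> S0" and ip: "idem p" using dp[OF xS] p_def by blast+
      have qS: "q \<in> S0" and iq: "idem q" using ds[OF yS] q_def by blast+
      have af: "a * f = f" and fa: "f * a = a" using fR greenR_idem[OF if' ia] a_def by blast+
      have gb: "g * b = g" and bg: "b * g = b" using gL greenL_idem[OF ig ib] b_def by blast+
      have ep: "e * p = e" and pe: "p * e = p" using eL greenL_idem[OF ie ip] p_def by blast+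
      have qh: "q * h = h" and hq: "h * q = q" using hR greenR_idem[OF ih iq] q_def by blast+
      have fgab: "f * g = a * b"
        by (rule key_band[OF qi sub comm band aS bS ia ib if' ig af fa gb bg])
      have xba: "xb * a = xb" using dsr[OF xS] a_def by simp
      have byb: "b * yb = yb" using dpl[OF yS] b_def by simp
      have pxb: "p * xb = xb" using dpl[OF xS] p_def by simp
      have ybq: "yb * q = yb" using dsr[OF yS] q_def by simp
      have xy: "x * y = e * (xb * yb) * h"
      proof -
        have "x * y = e * xb * (f * g) * yb * h" using x y by (simp add: mult.assoc)
        also have "\<dots> = e * (xb * a) * (b * yb) * h" using fgab by (simp add: mult.assoc)
        also have "\<dots> = e * (xb * yb) * h" using xba byb by (simp add: mult.assoc)
        finally show ?thesis .
      qed
      define z where "z = xb * yb"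
      have zS: "z \<in> S0" using subm xS yS z_def by blast
      define c where "c = dplus S0 z"
      define c' where "c' = dstar S0 z"
      have cS: "c \<in> S0" and ic: "idem c" and cR: "Rstar S0 z c" using dp[OF zS] c_def by blast+
      have c'S: "c' \<in> S0" and ic': "idem c'" and c'L: "Lstar S0 z c'" using ds[OF zS] c'_def by blast+
      have cc: "c * c = c" using ic by (simp add: idem_def)
      have cc': "c' * c' = c'" using ic' by (simp add: idem_def)
      have "p * z = z" using pxb z_def by (simp flip: mult.assoc)
      then have pc: "p * c = c" using Rstar_mono[OF cR pS] by blast
      have cp: "c * p = c" using pc comm cS pS ic ip by metis
      have ce: "c * e = c"
      proof -
        have "c * e = (c * p) * e" using cp by simp
        also have "\<dots> = c * (p * e)" by (simp add: mult.assoc)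
        also have "\<dots> = c" using cp pe by simp
        finally show ?thesis .
      qed
      have "z * q = z" using ybq z_def by (simp add: mult.assoc)
      then have c'q: "c' * q = c'" using Lstar_mono[OF c'L qS] by blast
      have qc': "q * c' = c'" using c'q comm c'S qS ic' iq by metis
      have hc': "h * c' = c'"
      proof -
        have "h * c' = (h * q) * c'" using qc' by (simp add: mult.assoc)
        also have "\<dots> = c'" using hq qc' by simp
        finally show ?thesis .
      qed
      have cz: "c * z = z" using Rstar_left[OF cR ic] .
      have zc': "z * c' = z" using Lstar_right[OF c'L ic'] .
      have ie': "idem (e * c)" unfolding idem_def
      proof -
        have "e * c * (e * c) = e * (c * e) * c" by (simp add: mult.assoc)
        also have "\<dots> = e * c" using ce cc by (simp add: mult.assoc)
        finally show "e * c * (e * c) = e * c" .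
      qed
      have ih': "idem (c' * h)" unfolding idem_def
      proof -
        have "c' * h * (c' * h) = c' * (h * c') * h" by (simp add: mult.assoc)
        also have "\<dots> = c' * h" using hc' cc' by (simp flip: mult.assoc)
        finally show "c' * h * (c' * h) = c' * h" .
      qed
      have gL': "greenL (e * c) c"
      proof -
        have "e * c * c = e * c" using cc by (simp add: mult.assoc)
        moreover have "c * (e * c) = c" using ce cc by (simp flip: mult.assoc)
        ultimately show ?thesis using greenL_idem[OF ie' ic] by blast
      qed
      have gR': "greenR (c' * h) c'"
      proof -
        have "c' * (c' * h) = c' * h" using cc' by (simp flip: mult.assoc)
        moreover have "c' * h * c' = c'" using hc' cc' by (simp add: mult.assoc)
        ultimately show ?thesis using greenR_idem[OF ih' ic'] by blast
      qed
      have "x * y = (e * c) * z * (c' * h)"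
      proof -
        have "(e * c) * z * (c' * h) = e * (c * z) * c' * h" by (simp add: mult.assoc)
        also have "\<dots> = e * (z * c') * h" using cz by (simp add: mult.assoc)
        also have "\<dots> = e * z * h" using zc' by simp
        finally show ?thesis using xy z_def by simp
      qed
      then have "transversal_rep S0 (x * y) z"
        unfolding transversal_rep_def using zS ie' ih' gL' gR' c_def c'_def by blast
      then show "tbar S0 (x * y) = tbar S0 x * tbar S0 y" using repu z_def xb_def yb_def by blast
    qed
  next
    assume hom: "\<forall>x y. tbar S0 (x * y) = tbar S0 x * tbar S0 y"
    have split: "\<exists>e f. g = e * f \<and> e * tbar S0 g = e \<and> tbar S0 g * f = f
        \<and> tbar S0 e = tbar S0 g \<and> tbar S0 f = tbar S0 g \<and> tbar S0 g \<in> S0 \<and> idem (tbar S0 g)"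
      if ig: "idem g" for g :: 'a
    proof -
      define G where "G = tbar S0 g"
      obtain e f where GS: "G \<in> S0" and ie: "idem e" and if': "idem f" and g: "g = e * G * f"
        and eL: "greenL e (dplus S0 G)" and fR: "greenR f (dstar S0 G)"
        using rep[of g] unfolding transversal_rep_def G_def by blast
      have "G = G * G" using hom ig unfolding G_def idem_def by metis
      then have iG: "idem G" unfolding idem_def by simp
      have dG: "dplus S0 G = G" "dstar S0 G = G" using idS0[OF GS iG] by blast+
      have eG: "e * G = e" and Ge: "G * e = G" using eL greenL_idem[OF ie iG] dG by simp_all
      have Gf: "G * f = f" and fG: "f * G = G" using fR greenR_idem[OF if' iG] dG by simp_all
      have GG: "greenL G G" "greenR G G" using greenL_idem[OF iG iG] greenR_idem[OF iG iG] iG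
        by (simp_all add: idem_def)
      have "e = e * G * G" using eG by (simp add: mult.assoc)
      then have "transversal_rep S0 e G" unfolding transversal_rep_def
        using GS ie iG eL GG dG by metis
      then have te: "tbar S0 e = G" by (rule repu)
      have "f = G * G * f" using Gf by (simp add: mult.assoc)
      then have "transversal_rep S0 f G" unfolding transversal_rep_def
        using GS if' iG fR GG dG by metis
      then have tf: "tbar S0 f = G" by (rule repu)
      have "g = e * f" using g eG by simp
      then show ?thesis using eG Gf te tf GS iG G_def by blast
    qed
    have "idem (g * h)" if ig: "idem g" and ih: "idem h" for g h :: 'a
    proof -
      define G where "G = tbar S0 g"
      define H where "H = tbar S0 h"
      obtain e f where g: "g = e * f" and eG: "e * G = e" and Gf: "G * f = f"
        and te: "tbar S0 e = G" and tf: "tbar S0 f = G" and GS: "G \<in> S0" and iG: "idem G"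
        using split[OF ig] G_def by blast
      obtain k l where h: "h = k * l" and kH: "k * H = k" and Hl: "H * l = l"
        and tk: "tbar S0 k = H" and tl: "tbar S0 l = H" and HS: "H \<in> S0" and iH: "idem H"
        using split[OF ih] H_def by blast
      have "G * (f * k) * H = f * k" using Gf kH by (simp add: mult.assoc flip: mult.assoc[of G f])
      moreover have "G * (f * k) * H \<in> S0" using qi GS HS by blast
      ultimately have "f * k \<in> S0" by simp
      then have fk: "f * k = G * H" using fixp hom tf tk by metis
      have "H * (l * e) * G = l * e" using Hl eG by (simp add: mult.assoc flip: mult.assoc[of H l])
      moreover have "H * (l * e) * G \<in> S0" using qi GS HS by blast
      ultimately have "l * e \<in> S0" by simp
      then have le: "l * e = H * G" using fixp hom tl te by metis
      have GH: "G * H = H * G" using comm GS HS iG iH by blast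
      have GG: "G * G = G" and HH: "H * H = H" using iG iH by (simp_all add: idem_def)
      have iGH: "G * H * (G * H) = G * H"
      proof -
        have "G * H * (G * H) = G * (H * G) * H" by (simp add: mult.assoc)
        also have "\<dots> = G * (G * H) * H" using GH by simp
        also have "\<dots> = (G * G) * (H * H)" by (simp add: mult.assoc)
        also have "\<dots> = G * H" using GG HH by simp
        finally show ?thesis .
      qed
      have gh: "g * h = e * (G * H) * l"
      proof -
        have "g * h = e * (f * k) * l" using g h by (simp add: mult.assoc)
        then show ?thesis using fk by simp
      qed
      have "g * h * (g * h) = e * ((G * H) * (l * e) * (G * H)) * l" using gh by (simp add: mult.assoc)
      also have "\<dots> = e * ((G * H) * (G * H) * (G * H)) * l" using le GH by simp
      also have "\<dots> = g * h" using iGH gh by simp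
      finally show ?thesis unfolding idem_def .
    qed
    then show "quasi_adequate (UNIV :: 'a set)" unfolding quasi_adequate_def using assms(1) by blast
  qed
qed

end
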